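(* For every $n\ge1$, the $\{\mathbf{3},\mathbf{2}+\mathbf{2}\}$-free naturally labelled posets on $[n]$ are in bijection with the labelled binary words of length $n$ satisfying all of the following: (1) the first letter is $\mathsf0$; (2) whenever two consecutive letters are both $\mathsf0$, their labels are decreasing; (3) whenever two consecutive letters are both $\mathsf1$, their labels are increasing; (4) the label of every $\mathsf1$ is greater than the labels of all $\mathsf0$s occurring earlier in the word.
   Context: A partial order $\preceq$ on $[n]$ is naturally labelled if $x\prec y$ implies $x<y$. It is $\mathbf{3}$-free if there are no $x\prec y\prec z$. It is $(\mathbf{2}+\mathbf{2})$-free if it has no induced subposet consisting of two disjoint $2$-element chains, i.e. no distinct $i\prec j$, $k\prec\ell$ with each of $i,j$ incomparable to each of $k,\ell$. A labelled binary word of length $n$ is a word $w_1\cdots w_n$ over $\{\mathsf0,\mathsf1\}$ together with a bijective assignment of labels from $[n]$ to its positions. *)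

theory Defs
  imports Main
begin

text \<open>A partial order on [n] = {1..n}, given as its (reflexive) order relation
  \<open>P \<subseteq> {1..n} \<times> {1..n}\<close>; \<open>(x,y) \<in> P\<close> means x \<preceq> y.\<close>
definition partial_order_on_n :: "nat \<Rightarrow> (nat \<times> nat) set \<Rightarrow> bool" where
  "partial_order_on_n n P \<longleftrightarrow>
     P \<subseteq> {1..n} \<times> {1..n} \<and>
     (\<forall>x\<in>{1..n}. (x, x) \<in> P) \<and>
     (\<forall>x y. (x, y) \<in> P \<and> (y, x) \<in> P \<longrightarrow> x = y) \<and>
     (\<forall>x y z. (x, y) \<in> P \<and> (y, z) \<in> P \<longrightarrow> (x, z) \<in> P)"

definition strict :: "(nat \<times> nat) set \<Rightarrow> nat \<Rightarrow> nat \<Rightarrow> bool" where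
  "strict P x y \<longleftrightarrow> (x, y) \<in> P \<and> x \<noteq> y"

definition incomparable :: "(nat \<times> nat) set \<Rightarrow> nat \<Rightarrow> nat \<Rightarrow> bool" where
  "incomparable P x y \<longleftrightarrow> (x, y) \<notin> P \<and> (y, x) \<notin> P"

definition naturally_labelled :: "(nat \<times> nat) set \<Rightarrow> bool" where
  "naturally_labelled P \<longleftrightarrow> (\<forall>x y. strict P x y \<longrightarrow> x < y)"

definition three_free :: "(nat \<times> nat) set \<Rightarrow> bool" where
  "three_free P \<longleftrightarrow> \<not> (\<exists>x y z. strict P x y \<and> strict P y z)"

definition two_two_free :: "(nat \<times> nat) set \<Rightarrow> bool" where
  "two_two_free P \<longleftrightarrow> \<not> (\<exists>i j k l. distinct [i, j, k, l] \<and> strict P i j \<and> strict P k l \<and>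
      incomparable P i k \<and> incomparable P i l \<and> incomparable P j k \<and> incomparable P j l)"

definition free_posets :: "nat \<Rightarrow> (nat \<times> nat) set set" where
  "free_posets n = {P. partial_order_on_n n P \<and> naturally_labelled P \<and> three_free P \<and> two_two_free P}"

datatype letter = L0 | L1

definition labelled_word :: "nat \<Rightarrow> (letter \<times> nat) list \<Rightarrow> bool" where
  "labelled_word n w \<longleftrightarrow> length w = n \<and> distinct (map snd w) \<and> set (map snd w) = {1..n}"

definition good_word :: "nat \<Rightarrow> (letter \<times> nat) list \<Rightarrow> bool" where
  "good_word n w \<longleftrightarrow> labelled_word n w \<and>
     fst (w ! 0) = L0 \<and>
     (\<forall>i. i + 1 < length w \<and> fst (w ! i) = L0 \<and> fst (w ! (i+1)) = L0 \<longrightarrow> snd (w ! i) > snd (w ! (i+1))) \<and>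
     (\<forall>i. i + 1 < length w \<and> fst (w ! i) = L1 \<and> fst (w ! (i+1)) = L1 \<longrightarrow> snd (w ! i) < snd (w ! (i+1))) \<and>
     (\<forall>i j. i < j \<and> j < length w \<and> fst (w ! i) = L0 \<and> fst (w ! j) = L1 \<longrightarrow> snd (w ! i) < snd (w ! j))"

definition good_words :: "nat \<Rightarrow> (letter \<times> nat) list set" where
  "good_words n = {w. good_word n w}"

end

theory Submission
  imports Defs
begin

definition phi :: "(letter \<times> nat) list \<Rightarrow> (nat \<times> nat) set" where
 "phi w = {(snd (w!i), snd (w!j)) | i j. i < length w \<and> j < length w \<and>
     (i = j \<or> (i < j \<and> fst (w!i) = L0 \<and> fst (w!j) = L1))}"

definition isT :: "(nat \<times> nat) set \<Rightarrow> nat \<Rightarrow> bool" where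
 "isT P z \<longleftrightarrow> (\<exists>s. strict P s z)"
definition Up :: "(nat \<times> nat) set \<Rightarrow> nat \<Rightarrow> nat set" where
 "Up P x = {t. strict P x t}"
definition Dn :: "(nat \<times> nat) set \<Rightarrow> nat \<Rightarrow> nat set" where
 "Dn P y = {s. strict P s y}"

definition R :: "(nat \<times> nat) set \<Rightarrow> nat \<Rightarrow> nat \<Rightarrow> bool" where
 "R P a b \<longleftrightarrow> (if isT P a then (if isT P b then Dn P a \<subset> Dn P b \<or> (Dn P a = Dn P b \<and> a < b)
        else \<not> strict P b a)
    else (if isT P b then strict P a b else Up P b \<subset> Up P a \<or> (Up P a = Up P b \<and> b < a)))"

definition lett :: "(nat \<times> nat) set \<Rightarrow> nat \<Rightarrow> letter" where
 "lett P z = (if isT P z then L1 else L0)"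

lemma R_asym: "R P a b \<Longrightarrow> \<not> R P b a"
  unfolding R_def by auto

lemma lab_inj: "distinct (map snd w) \<Longrightarrow> i < length w \<Longrightarrow> j < length w \<Longrightarrow> snd (w!i) = snd (w!j) \<Longrightarrow> i = j"
  by (metis length_map nth_eq_iff_index_eq nth_map)

lemma strict_phi:
  assumes d: "distinct (map snd w)"
  shows "strict (phi w) x y \<longleftrightarrow> (\<exists>i j. i < j \<and> j < length w \<and> w!i = (L0, x) \<and> w!j = (L1, y))"
proof
  assume "strict (phi w) x y"
  then obtain i j where ij: "x = snd (w!i)" "y = snd (w!j)" "i < length w" "j < length w"
    "i = j \<or> (i < j \<and> fst (w!i) = L0 \<and> fst (w!j) = L1)" "x \<noteq> y"
    unfolding strict_def phi_def by blast
  then have "i < j \<and> fst (w!i) = L0 \<and> fst (w!j) = L1" by auto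
  then show "\<exists>i j. i < j \<and> j < length w \<and> w!i = (L0, x) \<and> w!j = (L1, y)"
    using ij by (metis prod.collapse)
next
  assume "\<exists>i j. i < j \<and> j < length w \<and> w!i = (L0, x) \<and> w!j = (L1, y)"
  then obtain i j where ij: "i < j" "j < length w" "w!i = (L0, x)" "w!j = (L1, y)" by blast
  have "x \<noteq> y" using lab_inj[OF d, of i j] ij by auto
  moreover have "(x, y) \<in> phi w" unfolding phi_def
    using ij by (intro CollectI exI[of _ i] exI[of _ j]) auto
  ultimately show "strict (phi w) x y" unfolding strict_def by auto
qed

lemma refl_phi: "(x, x) \<in> phi w \<longleftrightarrow> (\<exists>i < length w. snd (w!i) = x)"
  unfolding phi_def by auto

lemma mem_phi: "(x, y) \<in> phi w \<longleftrightarrow> (x = y \<and> (\<exists>i < length w. snd (w!i) = x)) \<or> strict (phi w) x y"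
  using refl_phi[of x w] unfolding strict_def by auto


lemma no_chain:
  assumes d: "distinct (map snd w)" and "strict (phi w) x y" "strict (phi w) y z"
  shows False
proof -
  obtain i j where ij: "i < j" "j < length w" "w!j = (L1, y)" using assms(2) strict_phi[OF d] by blast
  obtain k l where kl: "k < l" "l < length w" "w!k = (L0, y)" using assms(3) strict_phi[OF d] by blast
  have "j = k" using lab_inj[OF d, of j k] ij kl by auto
  then show False using ij kl by auto
qed

lemma good_phi:
  assumes g: "good_word n w"
  shows "phi w \<in> free_posets n"
proof -
  have len: "length w = n" and d: "distinct (map snd w)" and st: "set (map snd w) = {1..n}"
    and c4: "\<And>i j. i < j \<Longrightarrow> j < length w \<Longrightarrow> fst (w ! i) = L0 \<Longrightarrow> fst (w ! j) = L1 \<Longrightarrow> snd (w ! i) < snd (w ! j)"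
    using g unfolding good_word_def labelled_word_def by auto
  have inr: "snd (w!i) \<in> {1..n}" if "i < length w" for i
    using st that by (metis nth_map length_map nth_mem)
  have ex: "\<exists>i < length w. snd (w!i) = x" if "x \<in> {1..n}" for x
    using st that by (metis in_set_conv_nth length_map nth_map)
  let ?P = "phi w"
  have po: "partial_order_on_n n ?P"
    unfolding partial_order_on_n_def
  proof (intro conjI allI impI ballI)
    show "?P \<subseteq> {1..n} \<times> {1..n}"
      unfolding phi_def using inr by auto
    show "(x, x) \<in> ?P" if "x \<in> {1..n}" for x
      using refl_phi ex that by blast
    show "x = y" if "(x, y) \<in> ?P \<and> (y, x) \<in> ?P" for x y
    proof (rule ccontr)
      assume "x \<noteq> y"
      then have "strict ?P x y" "strict ?P y x" using that unfolding strict_def by auto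
      then show False using no_chain[OF d] by blast
    qed
    show "(x, z) \<in> ?P" if "(x, y) \<in> ?P \<and> (y, z) \<in> ?P" for x y z
    proof (cases "x = y \<or> y = z")
      case True then show ?thesis using that by auto
    next
      case False
      then have "strict ?P x y" "strict ?P y z" using that unfolding strict_def by auto
      then show ?thesis using no_chain[OF d] by blast
    qed
  qed
  have nl: "naturally_labelled ?P"
    unfolding naturally_labelled_def
  proof (intro allI impI)
    fix x y assume "strict ?P x y"
    then obtain i j where "i < j" "j < length w" "w!i = (L0, x)" "w!j = (L1, y)"
      using strict_phi[OF d] by blast
    then show "x < y" using c4[of i j] by auto
  qed
  have tf: "three_free ?P"
    unfolding three_free_def using no_chain[OF d] by blast
  have ttf: "two_two_free ?P"
    unfolding two_two_free_def
  proof
    assume "\<exists>i j k l. distinct [i, j, k, l] \<and> strict ?P i j \<and> strict ?P k l \<and>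
      incomparable ?P i k \<and> incomparable ?P i l \<and> incomparable ?P j k \<and> incomparable ?P j l"
    then obtain x y u v where h: "distinct [x, y, u, v]" "strict ?P x y" "strict ?P u v"
      "incomparable ?P x v" "incomparable ?P y u" by blast
    obtain i j where ij: "i < j" "j < length w" "w!i = (L0, x)" "w!j = (L1, y)"
      using h(2) strict_phi[OF d] by blast
    obtain k l where kl: "k < l" "l < length w" "w!k = (L0, u)" "w!l = (L1, v)"
      using h(3) strict_phi[OF d] by blast
    show False
    proof (cases "i < k")
      case True
      then have "strict ?P x v" using strict_phi[OF d] ij kl by (meson order.strict_trans)
      then show False using h(4) unfolding incomparable_def strict_def by auto
    next
      case False
      have "i \<noteq> k" using ij kl h(1) by auto
      then have "k < i" using False by auto
      then have "strict ?P u y" using strict_phi[OF d] ij kl by (meson order.strict_trans)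
      then show False using h(5) unfolding incomparable_def strict_def by auto
    qed
  qed
  show ?thesis unfolding free_posets_def using po nl tf ttf by auto
qed


lemma isT_phi:
  assumes g: "good_word n w" and k: "k < length w"
  shows "isT (phi w) (snd (w!k)) \<longleftrightarrow> fst (w!k) = L1"
proof -
  have d: "distinct (map snd w)" and f0: "fst (w!0) = L0"
    using g unfolding good_word_def labelled_word_def by auto
  show ?thesis
  proof
    assume "isT (phi w) (snd (w!k))"
    then obtain s where "strict (phi w) s (snd (w!k))" unfolding isT_def by blast
    then obtain i j where ij: "i < j" "j < length w" "w!j = (L1, snd (w!k))"
      using strict_phi[OF d] by blast
    then have "j = k" using lab_inj[OF d, of j k] k by auto
    then show "fst (w!k) = L1" using ij by (metis fst_conv)
  next
    assume a: "fst (w!k) = L1"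
    then have "k \<noteq> 0" using f0 by (metis letter.distinct(1))
    then have "strict (phi w) (snd (w!0)) (snd (w!k))"
      unfolding strict_phi[OF d] using k f0 a
      by (intro exI[of _ 0] exI[of _ k]) (auto simp: prod_eq_iff)
    then show "isT (phi w) (snd (w!k))" unfolding isT_def by blast
  qed
qed

lemma chain0:
  fixes w :: "(letter \<times> nat) list"
  assumes c2: "\<forall>i. i + 1 < length w \<and> fst (w ! i) = L0 \<and> fst (w ! (i+1)) = L0 \<longrightarrow> snd (w ! i) > snd (w ! (i+1))"
  shows "i < j \<Longrightarrow> j < length w \<Longrightarrow> (\<forall>k. i \<le> k \<and> k \<le> j \<longrightarrow> fst (w!k) = L0) \<Longrightarrow> snd (w!i) > snd (w!j)"
proof (induction j)
  case 0 then show ?case by auto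
next
  case (Suc j)
  have s: "snd (w ! j) > snd (w ! Suc j)" using c2 Suc.prems by (auto simp: le_Suc_eq)
  show ?case
  proof (cases "i = j")
    case True then show ?thesis using s by auto
  next
    case False
    then have "snd (w!i) > snd (w!j)" using Suc by auto
    then show ?thesis using s by auto
  qed
qed

lemma chain1:
  fixes w :: "(letter \<times> nat) list"
  assumes c3: "\<forall>i. i + 1 < length w \<and> fst (w ! i) = L1 \<and> fst (w ! (i+1)) = L1 \<longrightarrow> snd (w ! i) < snd (w ! (i+1))"
  shows "i < j \<Longrightarrow> j < length w \<Longrightarrow> (\<forall>k. i \<le> k \<and> k \<le> j \<longrightarrow> fst (w!k) = L1) \<Longrightarrow> snd (w!i) < snd (w!j)"
proof (induction j)
  case 0 then show ?case by auto
next
  case (Suc j)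
  have s: "snd (w ! j) < snd (w ! Suc j)" using c3 Suc.prems by (auto simp: le_Suc_eq)
  show ?case
  proof (cases "i = j")
    case True then show ?thesis using s by auto
  next
    case False
    then have "snd (w!i) < snd (w!j)" using Suc by auto
    then show ?thesis using s by auto
  qed
qed

lemma letter_cases: "x \<noteq> L1 \<longleftrightarrow> x = L0" by (cases x) auto

lemma good_sorted:
  assumes g: "good_word n w"
  shows "sorted_wrt (R (phi w)) (map snd w)"
proof -
  have d: "distinct (map snd w)"
    and c2: "\<forall>i. i + 1 < length w \<and> fst (w ! i) = L0 \<and> fst (w ! (i+1)) = L0 \<longrightarrow> snd (w ! i) > snd (w ! (i+1))"
    and c3: "\<forall>i. i + 1 < length w \<and> fst (w ! i) = L1 \<and> fst (w ! (i+1)) = L1 \<longrightarrow> snd (w ! i) < snd (w ! (i+1))"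
    using g unfolding good_word_def labelled_word_def by auto
  let ?P = "phi w"
  have sp: "strict ?P x y \<longleftrightarrow> (\<exists>i j. i < j \<and> j < length w \<and> w!i = (L0, x) \<and> w!j = (L1, y))" for x y
    using strict_phi[OF d] .
  have pos: "k = m" if "k < length w" "m < length w" "w!k = (c, snd (w!m))" for k m c
    using lab_inj[OF d, of k m] that by auto
  show ?thesis
    unfolding sorted_wrt_iff_nth_less
  proof (intro allI impI)
    fix i j assume ij: "i < j" "j < length (map snd w)"
    then have ij': "i < j" "j < length w" "i < length w" by auto
    let ?a = "snd (w!i)" and ?b = "snd (w!j)"
    have wi: "w!i = (fst (w!i), ?a)" and wj: "w!j = (fst (w!j), ?b)" by auto
    have Ti: "isT ?P ?a \<longleftrightarrow> fst (w!i) = L1" using isT_phi[OF g] ij' by auto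
    have Tj: "isT ?P ?b \<longleftrightarrow> fst (w!j) = L1" using isT_phi[OF g] ij' by auto
    have "R ?P ?a ?b"
    proof (cases "fst (w!i)"; cases "fst (w!j)")
      assume c: "fst (w!i) = L0" "fst (w!j) = L0"
      have sub: "Up ?P ?b \<subseteq> Up ?P ?a"
      proof
        fix t assume "t \<in> Up ?P ?b"
        then obtain k l where kl: "k < l" "l < length w" "w!k = (L0, ?b)" "w!l = (L1, t)"
          unfolding Up_def sp by blast
        have "k = j" using pos[of k j] kl ij' by auto
        then show "t \<in> Up ?P ?a" unfolding Up_def sp using kl ij' c wi
          by (intro CollectI exI[of _ i] exI[of _ l]) auto
      qed
      show ?thesis
      proof (cases "\<exists>k. i < k \<and> k < j \<and> fst (w!k) = L1")
        case True
        then obtain k where k: "i < k" "k < j" "fst (w!k) = L1" by blast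
        have "snd (w!k) \<in> Up ?P ?a" unfolding Up_def sp using k ij' c wi
          by (intro CollectI exI[of _ i] exI[of _ k]) (auto simp: prod_eq_iff)
        moreover have "snd (w!k) \<notin> Up ?P ?b"
        proof
          assume "snd (w!k) \<in> Up ?P ?b"
          then obtain k' l where kl: "k' < l" "l < length w" "w!k' = (L0, ?b)" "w!l = (L1, snd (w!k))"
            unfolding Up_def sp by blast
          have "k' = j" using pos[of k' j] kl ij' by auto
          moreover have "l = k" using pos[of l k] kl k ij' by auto
          ultimately show False using kl k by auto
        qed
        ultimately show ?thesis using sub c Ti Tj unfolding R_def by auto
      next
        case False
        then have "\<forall>k. i \<le> k \<and> k \<le> j \<longrightarrow> fst (w!k) = L0"
          using c letter_cases by (metis le_neq_implies_less)
        then have "?b < ?a" using chain0[OF c2] ij' by auto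
        then show ?thesis using sub c Ti Tj unfolding R_def by auto
      qed
    next
      assume c: "fst (w!i) = L0" "fst (w!j) = L1"
      have "strict ?P ?a ?b" unfolding sp using ij' c wi wj
        by (intro exI[of _ i] exI[of _ j]) auto
      then show ?thesis using c Ti Tj unfolding R_def by auto
    next
      assume c: "fst (w!i) = L1" "fst (w!j) = L0"
      have "\<not> strict ?P ?b ?a"
      proof
        assume "strict ?P ?b ?a"
        then obtain k l where kl: "k < l" "l < length w" "w!k = (L0, ?b)" "w!l = (L1, ?a)"
          unfolding sp by blast
        have "k = j" using pos[of k j] kl ij' by auto
        moreover have "l = i" using pos[of l i] kl ij' by auto
        ultimately show False using kl ij' by auto
      qed
      then show ?thesis using c Ti Tj unfolding R_def by auto
    next
      assume c: "fst (w!i) = L1" "fst (w!j) = L1"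
      have sub: "Dn ?P ?a \<subseteq> Dn ?P ?b"
      proof
        fix t assume "t \<in> Dn ?P ?a"
        then obtain k l where kl: "k < l" "l < length w" "w!k = (L0, t)" "w!l = (L1, ?a)"
          unfolding Dn_def sp by blast
        have "l = i" using pos[of l i] kl ij' by auto
        then show "t \<in> Dn ?P ?b" unfolding Dn_def sp using kl ij' c wj
          by (intro CollectI exI[of _ k] exI[of _ j]) auto
      qed
      show ?thesis
      proof (cases "\<exists>k. i < k \<and> k < j \<and> fst (w!k) = L0")
        case True
        then obtain k where k: "i < k" "k < j" "fst (w!k) = L0" by blast
        have "snd (w!k) \<in> Dn ?P ?b" unfolding Dn_def sp using k ij' c wj
          by (intro CollectI exI[of _ k] exI[of _ j]) (auto simp: prod_eq_iff)
        moreover have "snd (w!k) \<notin> Dn ?P ?a"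
        proof
          assume "snd (w!k) \<in> Dn ?P ?a"
          then obtain k' l where kl: "k' < l" "l < length w" "w!k' = (L0, snd (w!k))" "w!l = (L1, ?a)"
            unfolding Dn_def sp by blast
          have "k' = k" using pos[of k' k] kl k ij' by auto
          moreover have "l = i" using pos[of l i] kl ij' by auto
          ultimately show False using kl k by auto
        qed
        ultimately show ?thesis using sub c Ti Tj unfolding R_def by auto
      next
        case False
        then have "\<forall>k. i \<le> k \<and> k \<le> j \<longrightarrow> fst (w!k) = L1"
          using c letter_cases by (metis le_neq_implies_less)
        then have "?a < ?b" using chain1[OF c3] ij' by auto
        then show ?thesis using sub c Ti Tj unfolding R_def by auto
      qed
    qed
    then show "R ?P (map snd w ! i) (map snd w ! j)" using ij' by simp
  qed
qed

lemma good_lett: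
  assumes g: "good_word n w"
  shows "w = map (\<lambda>z. (lett (phi w) z, z)) (map snd w)"
proof (rule nth_equalityI)
  fix k assume "k < length w"
  then show "w ! k = map (\<lambda>z. (lett (phi w) z, z)) (map snd w) ! k"
    using isT_phi[OF g] unfolding lett_def
    by (cases "fst (w!k)") (auto simp: prod_eq_iff)
qed simp


lemma sorted_unique:
  assumes asym: "\<forall>a b. Q a b \<longrightarrow> \<not> Q b a"
  shows "sorted_wrt Q xs \<Longrightarrow> sorted_wrt Q ys \<Longrightarrow> set xs = set ys \<Longrightarrow> xs = ys"
proof (induction xs arbitrary: ys)
  case Nil then show ?case by auto
next
  case (Cons a xs)
  then obtain b ys' where ys: "ys = b # ys'" by (cases ys) fastforce+
  have qa: "\<forall>x\<in>set xs. Q a x" and qb: "\<forall>x\<in>set ys'. Q b x"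
    using Cons.prems ys by auto
  have ab: "a = b"
  proof (rule ccontr)
    assume "a \<noteq> b"
    then have "b \<in> set xs" "a \<in> set ys'" using Cons.prems(3) ys by auto
    then show False using qa qb asym by blast
  qed
  have "a \<notin> set xs" using qa asym by blast
  moreover have "b \<notin> set ys'" using qb asym by blast
  ultimately have "set xs = set ys'" using Cons.prems(3) ys ab by auto
  moreover have "sorted_wrt Q xs" "sorted_wrt Q ys'" using Cons.prems ys by auto
  ultimately have "xs = ys'" using Cons.IH by blast
  then show ?case using ab ys by simp
qed

lemma sort_exists:
  assumes "finite S"
  shows "(\<forall>a\<in>S. \<forall>b\<in>S. \<forall>c\<in>S. Q a b \<longrightarrow> Q b c \<longrightarrow> Q a c) \<Longrightarrow> (\<forall>a\<in>S. \<forall>b\<in>S. a \<noteq> b \<longrightarrow> Q a b \<or> Q b a)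
   \<Longrightarrow> (\<forall>a b. Q a b \<longrightarrow> \<not> Q b a) \<Longrightarrow> \<exists>zs. set zs = S \<and> sorted_wrt Q zs \<and> distinct zs"
  using assms
proof (induction S rule: finite_induct)
  case empty then show ?case by auto
next
  case (insert x F)
  have p1: "\<forall>a\<in>F. \<forall>b\<in>F. \<forall>c\<in>F. Q a b \<longrightarrow> Q b c \<longrightarrow> Q a c"
    using insert.prems(1) by blast
  have p2: "\<forall>a\<in>F. \<forall>b\<in>F. a \<noteq> b \<longrightarrow> Q a b \<or> Q b a"
    using insert.prems(2) by blast
  obtain zs where zs: "set zs = F" "sorted_wrt Q zs" "distinct zs"
    using insert.IH[OF p1 p2 insert.prems(3)] by blast
  let ?A = "filter (\<lambda>z. Q z x) zs" and ?B = "filter (\<lambda>z. Q x z) zs"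
  let ?l = "?A @ x # ?B"
  have xS: "x \<notin> F" by fact
  have tot: "\<forall>z\<in>F. Q z x \<or> Q x z"
  proof
    fix z assume z: "z \<in> F"
    then have "z \<noteq> x" using xS by auto
    moreover have "z \<in> insert x F" "x \<in> insert x F" using z by auto
    ultimately show "Q z x \<or> Q x z" using insert.prems(2) by blast
  qed
  have "set ?l = insert x F"
  proof -
    have "set ?l = {z \<in> F. Q z x} \<union> {x} \<union> {z \<in> F. Q x z}" using zs(1) by auto
    also have "\<dots> = insert x F" using tot by blast
    finally show ?thesis .
  qed
  moreover have "sorted_wrt Q ?l"
  proof -
    have "sorted_wrt Q ?A" "sorted_wrt Q ?B" using zs(2) by (simp_all add: sorted_wrt_filter)
    moreover have "\<forall>y\<in>set ?B. Q x y" by simp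
    moreover have "\<forall>a\<in>set ?A. \<forall>b\<in>set (x # ?B). Q a b"
    proof (intro ballI)
      fix a b assume a: "a \<in> set ?A" and b: "b \<in> set (x # ?B)"
      have aF: "a \<in> F" "Q a x" using a zs(1) by auto
      show "Q a b"
      proof (cases "b = x")
        case True then show ?thesis using aF(2) by simp
      next
        case False
        then have "b \<in> F" "Q x b" using b zs(1) by auto
        then show ?thesis using aF insert.prems(1) by (meson insertCI)
      qed
    qed
    ultimately show ?thesis unfolding sorted_wrt_append sorted_wrt.simps(2) by blast
  qed
  moreover have "distinct ?l"
  proof -
    have "x \<notin> set ?A" "x \<notin> set ?B" using zs(1) xS by auto
    moreover have "set ?A \<inter> set ?B = {}" using insert.prems(3) by auto
    ultimately show ?thesis using zs(3) by auto
  qed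
  ultimately show ?case by blast
qed

lemma good_inj:
  assumes g1: "good_word n w" and g2: "good_word n w'" and e: "phi w = phi w'"
  shows "w = w'"
proof -
  have s1: "sorted_wrt (R (phi w)) (map snd w)" using good_sorted[OF g1] .
  have s2: "sorted_wrt (R (phi w)) (map snd w')" using good_sorted[OF g2] e by simp
  have st: "set (map snd w) = set (map snd w')"
    using g1 g2 unfolding good_word_def labelled_word_def by simp
  have as: "\<forall>a b. R (phi w) a b \<longrightarrow> \<not> R (phi w) b a" using R_asym by blast
  have "map snd w = map snd w'" using sorted_unique[OF as s1 s2 st] .
  then show ?thesis using good_lett[OF g1] good_lett[OF g2] e by metis
qed


context
  fixes n :: nat and P :: "(nat \<times> nat) set"
  assumes PF: "P \<in> free_posets n"
begin

lemma po: "partial_order_on_n n P" and nl: "naturally_labelled P" and tf: "three_free P"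
  and ttf: "two_two_free P"
  using PF unfolding free_posets_def by auto

lemma Psub: "(x, y) \<in> P \<Longrightarrow> x \<in> {1..n} \<and> y \<in> {1..n}"
proof -
  have "P \<subseteq> {1..n} \<times> {1..n}" using po unfolding partial_order_on_n_def by blast
  then show "(x, y) \<in> P \<Longrightarrow> x \<in> {1..n} \<and> y \<in> {1..n}" by blast
qed

lemma F1: "strict P a b \<Longrightarrow> a \<in> {1..n} \<and> b \<in> {1..n} \<and> a < b \<and> \<not> isT P a \<and> isT P b"
proof -
  assume s: "strict P a b"
  have "\<not> isT P a"
  proof
    assume "isT P a"
    then obtain c where "strict P c a" unfolding isT_def by blast
    then show False using s tf unfolding three_free_def by blast
  qed
  moreover have "a \<in> {1..n} \<and> b \<in> {1..n}" using s Psub unfolding strict_def by blast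
  moreover have "a < b" using s nl unfolding naturally_labelled_def by blast
  moreover have "isT P b" using s unfolding isT_def by blast
  ultimately show ?thesis by blast
qed

lemma pc: "(x, y) \<in> P \<Longrightarrow> x = y \<or> strict P x y" unfolding strict_def by auto
lemma sT: "strict P x y \<Longrightarrow> isT P y" unfolding isT_def by blast
lemma sB: "strict P x y \<Longrightarrow> \<not> isT P x" using F1 by blast

lemma nestD: "isT P a \<Longrightarrow> isT P b \<Longrightarrow> Dn P a \<subseteq> Dn P b \<or> Dn P b \<subseteq> Dn P a"
proof (rule ccontr)
  assume Ta: "isT P a" and Tb: "isT P b" and "\<not> (Dn P a \<subseteq> Dn P b \<or> Dn P b \<subseteq> Dn P a)"
  then obtain s s' where s: "strict P s a" "\<not> strict P s b" and s': "strict P s' b" "\<not> strict P s' a"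
    unfolding Dn_def by auto
  have ns: "\<not> isT P s" "\<not> isT P s'" using sB s s' by auto
  have d: "distinct [s, a, s', b]" using s s' ns Ta Tb by auto
  have i1: "incomparable P s s'"
    unfolding incomparable_def using pc sT ns s s' by blast
  have i2: "incomparable P s b"
    unfolding incomparable_def using pc sT ns s Tb by blast
  have i3: "incomparable P a s'"
    unfolding incomparable_def using pc sT sB ns s' Ta by blast
  have i4: "incomparable P a b"
    unfolding incomparable_def using pc sB s s' Ta Tb by blast
  show False using ttf d s(1) s'(1) i1 i2 i3 i4 unfolding two_two_free_def by blast
qed

lemma nestU: "\<not> isT P a \<Longrightarrow> \<not> isT P b \<Longrightarrow> Up P a \<subseteq> Up P b \<or> Up P b \<subseteq> Up P a"
proof (rule ccontr)
  assume Ta: "\<not> isT P a" and Tb: "\<not> isT P b" and "\<not> (Up P a \<subseteq> Up P b \<or> Up P b \<subseteq> Up P a)"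
  then obtain t t' where t: "strict P a t" "\<not> strict P b t" and t': "strict P b t'" "\<not> strict P a t'"
    unfolding Up_def by auto
  have ns: "isT P t" "isT P t'" using sT t t' by auto
  have d: "distinct [a, t, b, t']" using t t' ns Ta Tb by auto
  have i1: "incomparable P a b"
    unfolding incomparable_def using pc sT Ta Tb t t' by blast
  have i2: "incomparable P a t'"
    unfolding incomparable_def using pc sB Ta t' ns by blast
  have i3: "incomparable P t b"
    unfolding incomparable_def using pc sB Tb t ns by blast
  have i4: "incomparable P t t'"
    unfolding incomparable_def using pc sB t t' ns by blast
  show False using ttf d t(1) t'(1) i1 i2 i3 i4 unfolding two_two_free_def by blast
qed

lemma R_trans:
  assumes ab: "R P a b" and bc: "R P b c"
  shows "R P a c"
proof (cases "isT P a"; cases "isT P b"; cases "isT P c")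
  assume T: "isT P a" "isT P b" "isT P c"
  then have "Dn P a \<subset> Dn P b \<or> (Dn P a = Dn P b \<and> a < b)" "Dn P b \<subset> Dn P c \<or> (Dn P b = Dn P c \<and> b < c)"
    using ab bc unfolding R_def by auto
  then have "Dn P a \<subset> Dn P c \<or> (Dn P a = Dn P c \<and> a < c)" by auto
  then show ?thesis using T unfolding R_def by auto
next
  assume T: "isT P a" "isT P b" "\<not> isT P c"
  then have "Dn P a \<subseteq> Dn P b" "\<not> strict P c b" using ab bc unfolding R_def by auto
  then have "\<not> strict P c a" unfolding Dn_def by auto
  then show ?thesis using T unfolding R_def by auto
next
  assume T: "isT P a" "\<not> isT P b" "isT P c"
  then have h: "\<not> strict P b a" "strict P b c" using ab bc unfolding R_def by auto
  then have "b \<in> Dn P c - Dn P a" unfolding Dn_def by auto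
  then have "Dn P a \<subset> Dn P c" using nestD[of a c] T by auto
  then show ?thesis using T unfolding R_def by auto
next
  assume T: "isT P a" "\<not> isT P b" "\<not> isT P c"
  then have "\<not> strict P b a" "Up P c \<subseteq> Up P b" using ab bc unfolding R_def by auto
  then have "\<not> strict P c a" unfolding Up_def by auto
  then show ?thesis using T unfolding R_def by auto
next
  assume T: "\<not> isT P a" "isT P b" "isT P c"
  then have "strict P a b" "Dn P b \<subseteq> Dn P c" using ab bc unfolding R_def by auto
  then have "strict P a c" unfolding Dn_def by auto
  then show ?thesis using T unfolding R_def by auto
next
  assume T: "\<not> isT P a" "isT P b" "\<not> isT P c"
  then have h: "strict P a b" "\<not> strict P c b" using ab bc unfolding R_def by auto
  then have "b \<in> Up P a - Up P c" unfolding Up_def by auto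
  then have "Up P c \<subset> Up P a" using nestU[of a c] T by auto
  then show ?thesis using T unfolding R_def by auto
next
  assume T: "\<not> isT P a" "\<not> isT P b" "isT P c"
  then have "Up P b \<subseteq> Up P a" "strict P b c" using ab bc unfolding R_def by auto
  then have "strict P a c" unfolding Up_def by auto
  then show ?thesis using T unfolding R_def by auto
next
  assume T: "\<not> isT P a" "\<not> isT P b" "\<not> isT P c"
  then have "Up P b \<subset> Up P a \<or> (Up P a = Up P b \<and> b < a)" "Up P c \<subset> Up P b \<or> (Up P b = Up P c \<and> c < b)"
    using ab bc unfolding R_def by auto
  then have "Up P c \<subset> Up P a \<or> (Up P a = Up P c \<and> c < a)" by auto
  then show ?thesis using T unfolding R_def by auto
qed

lemma R_total: "a \<noteq> b \<Longrightarrow> R P a b \<or> R P b a"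
proof (cases "isT P a"; cases "isT P b")
  assume "a \<noteq> b" "isT P a" "isT P b"
  then show ?thesis using nestD[of a b] unfolding R_def by auto
next
  assume "a \<noteq> b" "\<not> isT P a" "\<not> isT P b"
  then show ?thesis using nestU[of a b] unfolding R_def by auto
qed (auto simp: R_def)

lemma refl_P: "x \<in> {1..n} \<Longrightarrow> (x, x) \<in> P"
  using po unfolding partial_order_on_n_def by blast

lemma construct:
  assumes n1: "n \<ge> 1"
  shows "\<exists>w. good_word n w \<and> phi w = P"
proof -
  have t: "\<forall>a\<in>{1..n}. \<forall>b\<in>{1..n}. \<forall>c\<in>{1..n}. R P a b \<longrightarrow> R P b c \<longrightarrow> R P a c"
    using R_trans by blast
  have to: "\<forall>a\<in>{1..n}. \<forall>b\<in>{1..n}. a \<noteq> b \<longrightarrow> R P a b \<or> R P b a" using R_total by blast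
  have as: "\<forall>a b. R P a b \<longrightarrow> \<not> R P b a" using R_asym by blast
  obtain zs where zs: "set zs = {1..n}" "sorted_wrt (R P) zs" "distinct zs"
    using sort_exists[OF _ t to as] by blast
  have len: "length zs = n" using distinct_card[OF zs(3)] zs(1) by simp
  have srt: "R P (zs!i) (zs!j)" if "i < j" "j < n" for i j
    using zs(2) that len unfolding sorted_wrt_iff_nth_less by auto
  have ord: "i < j" if "i < n" "j < n" "R P (zs!i) (zs!j)" for i j
  proof (rule ccontr)
    assume "\<not> i < j"
    then have "j < i \<or> i = j" by auto
    then show False
    proof
      assume "j < i" then show False using srt[of j i] that R_asym by blast
    next
      assume "i = j" then show False using that R_asym by blast
    qed
  qed
  have idx: "\<exists>k<n. zs!k = z" if "z \<in> {1..n}" for z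
    using that zs(1) len by (metis in_set_conv_nth)
  have inn: "zs!k \<in> {1..n}" if "k < n" for k
    using that zs(1) len nth_mem by blast
  define w where "w = map (\<lambda>z. (lett P z, z)) zs"
  have lw: "length w = n" unfolding w_def using len by simp
  have wk: "w!k = (lett P (zs!k), zs!k)" if "k < n" for k
    unfolding w_def using that len by simp
  have sw: "map snd w = zs" unfolding w_def by (induction zs) auto
  have l0: "lett P z = L0 \<longleftrightarrow> \<not> isT P z" for z unfolding lett_def by auto
  have l1: "lett P z = L1 \<longleftrightarrow> isT P z" for z unfolding lett_def by auto
  have RBT: "R P a b \<longleftrightarrow> strict P a b" if "\<not> isT P a" "isT P b" for a b
    using that unfolding R_def by auto
  have RTB: "R P a b \<longleftrightarrow> \<not> strict P b a" if "isT P a" "\<not> isT P b" for a b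
    using that unfolding R_def by auto
  have c1: "fst (w!0) = L0"
  proof (rule ccontr)
    assume "fst (w!0) \<noteq> L0"
    then have T0: "isT P (zs!0)" using wk[of 0] n1 l0 by auto
    then obtain s where s: "strict P s (zs!0)" unfolding isT_def by blast
    then have "s \<in> {1..n}" "\<not> isT P s" using F1 by auto
    then obtain k where k: "k < n" "zs!k = s" using idx by blast
    have "R P (zs!k) (zs!0)" using RBT[of s "zs!0"] s T0 k \<open>\<not> isT P s\<close> by simp
    then have "k < 0" using ord[of k 0] k n1 by auto
    then show False by simp
  qed
  have c2: "snd (w ! i) > snd (w ! (i+1))"
    if "i + 1 < length w" "fst (w ! i) = L0" "fst (w ! (i+1)) = L0" for i
  proof -
    let ?a = "zs!i" and ?b = "zs!(i+1)"
    have nT: "\<not> isT P ?a" "\<not> isT P ?b" using that wk lw l0 by auto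
    have r: "Up P ?b \<subset> Up P ?a \<or> (Up P ?a = Up P ?b \<and> ?b < ?a)"
      using srt[of i "i+1"] that lw nT unfolding R_def by auto
    have "\<not> Up P ?b \<subset> Up P ?a"
    proof
      assume "Up P ?b \<subset> Up P ?a"
      then obtain t where tt: "strict P ?a t" "\<not> strict P ?b t" unfolding Up_def by auto
      then have "t \<in> {1..n}" "isT P t" using F1 by auto
      then obtain k where k: "k < n" "zs!k = t" using idx by blast
      have "R P ?a (zs!k)" using RBT nT tt k \<open>isT P t\<close> by simp
      then have "i < k" using ord[of i k] k that lw by auto
      moreover have "R P (zs!k) ?b" using RTB nT tt k \<open>isT P t\<close> by simp
      then have "k < i + 1" using ord[of k "i+1"] k that lw by auto
      ultimately show False by simp
    qed
    then show ?thesis using r wk that lw by auto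
  qed
  have c3: "snd (w ! i) < snd (w ! (i+1))"
    if "i + 1 < length w" "fst (w ! i) = L1" "fst (w ! (i+1)) = L1" for i
  proof -
    let ?a = "zs!i" and ?b = "zs!(i+1)"
    have T: "isT P ?a" "isT P ?b" using that wk lw l1 by auto
    have r: "Dn P ?a \<subset> Dn P ?b \<or> (Dn P ?a = Dn P ?b \<and> ?a < ?b)"
      using srt[of i "i+1"] that lw T unfolding R_def by auto
    have "\<not> Dn P ?a \<subset> Dn P ?b"
    proof
      assume "Dn P ?a \<subset> Dn P ?b"
      then obtain t where tt: "strict P t ?b" "\<not> strict P t ?a" unfolding Dn_def by auto
      then have "t \<in> {1..n}" "\<not> isT P t" using F1 by auto
      then obtain k where k: "k < n" "zs!k = t" using idx by blast
      have "R P ?a (zs!k)" using RTB T tt k \<open>\<not> isT P t\<close> by simp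
      then have "i < k" using ord[of i k] k that lw by auto
      moreover have "R P (zs!k) ?b" using RBT T tt k \<open>\<not> isT P t\<close> by simp
      then have "k < i + 1" using ord[of k "i+1"] k that lw by auto
      ultimately show False by simp
    qed
    then show ?thesis using r wk that lw by auto
  qed
  have c4: "snd (w ! i) < snd (w ! j)"
    if "i < j" "j < length w" "fst (w ! i) = L0" "fst (w ! j) = L1" for i j
  proof -
    have "\<not> isT P (zs!i)" "isT P (zs!j)" using that wk lw l0 l1 by auto
    then have "strict P (zs!i) (zs!j)" using RBT srt[of i j] that lw by auto
    then show ?thesis using F1 wk that lw by auto
  qed
  have g: "good_word n w"
    unfolding good_word_def labelled_word_def
    using lw sw zs c1 c2 c3 c4 by auto
  have "phi w = P"
  proof (intro set_eqI iffI)
    fix p assume "p \<in> phi w"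
    then obtain i j where ij: "p = (snd (w!i), snd (w!j))" "i < n" "j < n"
      "i = j \<or> (i < j \<and> fst (w!i) = L0 \<and> fst (w!j) = L1)"
      unfolding phi_def lw[symmetric] by blast
    show "p \<in> P"
    proof (cases "i = j")
      case True then show ?thesis using ij refl_P inn wk by auto
    next
      case False
      then have "i < j" "\<not> isT P (zs!i)" "isT P (zs!j)" using ij wk l0 l1 by auto
      then have "strict P (zs!i) (zs!j)" using RBT srt[of i j] ij by auto
      then show ?thesis using ij wk unfolding strict_def by auto
    qed
  next
    fix p assume pP: "p \<in> P"
    obtain x y where p: "p = (x, y)" by (cases p)
    have xy: "x \<in> {1..n}" "y \<in> {1..n}" using Psub pP p by auto
    obtain i where i: "i < n" "zs!i = x" using idx xy by blast
    obtain j where j: "j < n" "zs!j = y" using idx xy by blast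
    show "p \<in> phi w"
    proof (cases "x = y")
      case True
      then show ?thesis unfolding phi_def p using i wk lw
        by (intro CollectI exI[of _ i] exI[of _ i]) auto
    next
      case False
      then have s: "strict P x y" using pP p unfolding strict_def by auto
      then have "\<not> isT P x" "isT P y" using F1 by auto
      moreover then have "i < j" using ord[of i j] i j RBT s by auto
      ultimately show ?thesis unfolding phi_def p using i j wk lw l0 l1
        by (intro CollectI exI[of _ i] exI[of _ j]) auto
    qed
  qed
  then show ?thesis using g by blast
qed

end

theorem proposition7:
  fixes n :: nat
  assumes "n \<ge> 1"
  shows "\<exists>f. bij_betw f (free_posets n) (good_words n)"
proof -
  have "bij_betw phi (good_words n) (free_posets n)"
    unfolding bij_betw_def
  proof
    show "inj_on phi (good_words n)"
      unfolding inj_on_def good_words_def using good_inj by blast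
    show "phi ` good_words n = free_posets n"
    proof
      show "phi ` good_words n \<subseteq> free_posets n" unfolding good_words_def using good_phi by blast
      show "free_posets n \<subseteq> phi ` good_words n"
      proof
        fix P assume "P \<in> free_posets n"
        then obtain w where "good_word n w" "phi w = P" using construct assms by blast
        then show "P \<in> phi ` good_words n" unfolding good_words_def by blast
      qed
    qed
  qed
  then have "bij_betw (the_inv_into (good_words n) phi) (free_posets n) (good_words n)"
    by (rule bij_betw_the_inv_into)
  then show ?thesis by blast
qed

end
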